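(* If $u\in\operatorname{Lip}([0,1])$, then for all $n\in\mathbb{N}$ the function $\operatorname{Avg}_1^{(n)}u$ is Lipschitz on $V_1^{(n)}$ with $[\operatorname{Avg}_1^{(n)}u]_{\operatorname{Lip}(V_1^{(n)})}\le[u]_{\operatorname{Lip}([0,1])}$.
   Context: $V_1^{(n)}=\{k/2^n:0\le k\le2^n\}$. For $\bar x\in V_1^{(n)}$, $U_1^{(n)}(\bar x)=[\bar x-2^{-n-1},\bar x+2^{-n-1})\cap[0,1]$ and $\operatorname{Avg}_1^{(n)}u(\bar x)=\frac1{|U_1^{(n)}(\bar x)|}\int_{U_1^{(n)}(\bar x)}u(z)\,dz$. $[f]_{\operatorname{Lip}(A)}=\sup_{x\ne y\in A}|f(x)-f(y)|/|x-y|$. *)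

theory Defs
  imports "HOL-Analysis.Analysis"
begin

definition V1 :: "nat \<Rightarrow> real set" where
  "V1 n = {real k / 2 ^ n | k::nat. k \<le> 2 ^ n}"

definition U1 :: "nat \<Rightarrow> real \<Rightarrow> real set" where
  "U1 n xb = {xb - 1 / 2 ^ (n + 1) ..< xb + 1 / 2 ^ (n + 1)} \<inter> {0..1}"

definition Avg1 :: "nat \<Rightarrow> (real \<Rightarrow> real) \<Rightarrow> real \<Rightarrow> real" where
  "Avg1 n u xb = integral (U1 n xb) u / measure lebesgue (U1 n xb)"

definition lip_semi :: "real set \<Rightarrow> (real \<Rightarrow> real) \<Rightarrow> real" where
  "lip_semi A f = Sup {\<bar>f x - f y\<bar> / \<bar>x - y\<bar> | x y. x \<in> A \<and> y \<in> A \<and> x \<noteq> y}"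

end

theory Submission
  imports Defs
begin

lemma avg_repr:
  fixes u :: "real \<Rightarrow> real"
  assumes x: "x \<in> {0..1}" and cu: "continuous_on {0..1} u"
  shows "Avg1 n u x = integral {0..1} (\<lambda>s. u ((min 1 (x + 1/2^(n+1)) - max 0 (x - 1/2^(n+1))) * s + max 0 (x - 1/2^(n+1))))"
proof -
  define h :: real where "h = 1/2^(n+1)"
  define a where "a = max 0 (x - h)"
  define b where "b = min 1 (x + h)"
  have hpos: "h > 0" unfolding h_def by simp
  have ab: "a < b" "0 \<le> a" "b \<le> 1" using x hpos unfolding a_def b_def by auto
  have U: "U1 n x = {x - h..<x + h} \<inter> {0..1}" unfolding U1_def h_def by simp
  have sub: "U1 n x \<subseteq> {a..b}" unfolding U a_def b_def by auto
  have sub2: "{a..b} - U1 n x \<subseteq> {b}" unfolding U a_def b_def using x hpos by auto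
  have neg: "negligible ({a..b} - U1 n x)"
    using negligible_subset[OF negligible_sing sub2] .
  have I: "integral (U1 n x) u = integral {a..b} u"
    by (rule integral_subset_negligible[OF sub neg])
  have meas: "measure lebesgue (U1 n x) = b - a"
  proof -
    have "measure lebesgue (U1 n x) = measure lebesgue {a..b}"
      apply (rule measure_negligible_symdiff) using sub neg by (auto simp: Un_absorb2)
    also have "\<dots> = b - a" using ab by simp
    finally show ?thesis .
  qed
  have "u integrable_on {a..b}"
    by (rule integrable_continuous_interval, rule continuous_on_subset[OF cu]) (use ab in auto)
  then have hi: "(u has_integral integral {a..b} u) (cbox a b)" by (simp add: integrable_integral)
  have "((\<lambda>s. u ((b - a) *\<^sub>R s + a)) has_integral (integral {a..b} u /\<^sub>R (b - a) ^ DIM(real)))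
           (cbox ((a - a) /\<^sub>R (b - a)) ((b - a) /\<^sub>R (b - a)))"
    by (rule has_integral_affinity'[OF hi]) (use ab in simp)
  then have "((\<lambda>s. u ((b - a) * s + a)) has_integral (integral {a..b} u / (b - a))) {0..1}"
    using ab by (simp add: divide_simps)
  then have "integral {0..1} (\<lambda>s. u ((b - a) * s + a)) = integral {a..b} u / (b - a)"
    by (rule integral_unique)
  then show ?thesis unfolding Avg1_def I meas a_def b_def h_def by simp
qed

theorem lemma4p12:
  fixes u :: "real \<Rightarrow> real"
  assumes "\<exists>L. L-lipschitz_on {0..1} u"
  shows "\<forall>n. (\<exists>L. L-lipschitz_on (V1 n) (Avg1 n u))
             \<and> lip_semi (V1 n) (Avg1 n u) \<le> lip_semi {0..1} u"
proof
  fix n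
  obtain L where L: "L-lipschitz_on {0..1} u" using assms by blast
  define M where "M = lip_semi {0..1} u"
  define S where "S = {\<bar>u x - u y\<bar> / \<bar>x - y\<bar> | x y. x \<in> {0..1::real} \<and> y \<in> {0..1} \<and> x \<noteq> y}"
  have Mdef: "M = Sup S" unfolding M_def S_def lip_semi_def by simp
  have bdd: "bdd_above S"
  proof (rule bdd_aboveI[where M=L])
    fix q assume "q \<in> S"
    then obtain x y where q: "q = \<bar>u x - u y\<bar> / \<bar>x - y\<bar>" "x \<in> {0..1}" "y \<in> {0..1}" "x \<noteq> y"
      unfolding S_def by blast
    have "\<bar>u x - u y\<bar> \<le> L * \<bar>x - y\<bar>" using lipschitz_onD[OF L q(2,3)] by (simp add: dist_real_def)
    then show "q \<le> L" using q(1,4) by (simp add: pos_divide_le_eq)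
  qed
  have Mlip: "\<bar>u x - u y\<bar> \<le> M * \<bar>x - y\<bar>" if "x \<in> {0..1}" "y \<in> {0..1}" for x y
  proof (cases "x = y")
    case True then show ?thesis by simp
  next
    case False
    have "\<bar>u x - u y\<bar> / \<bar>x - y\<bar> \<in> S" unfolding S_def using that False by blast
    then have "\<bar>u x - u y\<bar> / \<bar>x - y\<bar> \<le> M" unfolding Mdef using bdd by (simp add: cSup_upper)
    then show ?thesis using False by (simp add: divide_simps)
  qed
  have M0: "M \<ge> 0" using Mlip[of 0 1] by simp
  have cu: "continuous_on {0..1} u" using L by (rule lipschitz_on_continuous_on)
  have key: "\<bar>Avg1 n u x - Avg1 n u y\<bar> \<le> M * \<bar>x - y\<bar>" if x: "x \<in> {0..1}" and y: "y \<in> {0..1}" for x y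
  proof -
    define h :: real where "h = 1/2^(n+1)"
    have hpos: "h > 0" unfolding h_def by simp
    define ax where "ax = max 0 (x - h)"
    define bx where "bx = min 1 (x + h)"
    define ay where "ay = max 0 (y - h)"
    define by' where "by' = min 1 (y + h)"
    have A: "Avg1 n u x = integral {0..1} (\<lambda>s. u ((bx - ax) * s + ax))"
      using avg_repr[OF x cu, of n] unfolding ax_def bx_def h_def .
    have B: "Avg1 n u y = integral {0..1} (\<lambda>s. u ((by' - ay) * s + ay))"
      using avg_repr[OF y cu, of n] unfolding ay_def by'_def h_def .
    have abx: "ax < bx" "0 \<le> ax" "bx \<le> 1" using x hpos unfolding ax_def bx_def by auto
    have aby: "ay < by'" "0 \<le> ay" "by' \<le> 1" using y hpos unfolding ay_def by'_def by auto
    have da: "\<bar>ax - ay\<bar> \<le> \<bar>x - y\<bar>" unfolding ax_def ay_def by auto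
    have db: "\<bar>bx - by'\<bar> \<le> \<bar>x - y\<bar>" unfolding bx_def by'_def by auto
    have inx: "(bx - ax) * s + ax \<in> {0..1}" if "s \<in> {0..1}" for s
    proof -
      have "(bx - ax) * s \<ge> 0" using that abx by auto
      moreover have "(bx - ax) * s \<le> (bx - ax) * 1" using that abx by (intro mult_left_mono) auto
      ultimately show ?thesis using abx unfolding atLeastAtMost_iff by (smt (verit))
    qed
    have iny: "(by' - ay) * s + ay \<in> {0..1}" if "s \<in> {0..1}" for s
    proof -
      have "(by' - ay) * s \<ge> 0" using that aby by auto
      moreover have "(by' - ay) * s \<le> (by' - ay) * 1" using that aby by (intro mult_left_mono) auto
      ultimately show ?thesis using aby unfolding atLeastAtMost_iff by (smt (verit))
    qed
    have ix: "(\<lambda>s. u ((bx - ax) * s + ax)) integrable_on {0..1}"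
      apply (rule integrable_continuous_interval)
      apply (rule continuous_on_compose2[OF cu])
      using inx by (auto intro!: continuous_intros)
    have iy: "(\<lambda>s. u ((by' - ay) * s + ay)) integrable_on {0..1}"
      apply (rule integrable_continuous_interval)
      apply (rule continuous_on_compose2[OF cu])
      using iny by (auto intro!: continuous_intros)
    have pt: "norm (u ((bx - ax) * s + ax) - u ((by' - ay) * s + ay)) \<le> M * \<bar>x - y\<bar>"
      if s: "s \<in> {0..1}" for s
    proof -
      have eq: "((bx - ax) * s + ax) - ((by' - ay) * s + ay) = (1 - s) * (ax - ay) + s * (bx - by')"
        by (simp add: algebra_simps)
      have "\<bar>(1 - s) * (ax - ay)\<bar> \<le> (1 - s) * \<bar>x - y\<bar>"
        using s da by (simp add: abs_mult mult_left_mono)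
      moreover have "\<bar>s * (bx - by')\<bar> \<le> s * \<bar>x - y\<bar>"
        using s db by (simp add: abs_mult mult_left_mono)
      moreover have "(1 - s) * \<bar>x - y\<bar> + s * \<bar>x - y\<bar> = \<bar>x - y\<bar>"
        by (simp add: algebra_simps)
      ultimately have d: "\<bar>((bx - ax) * s + ax) - ((by' - ay) * s + ay)\<bar> \<le> \<bar>x - y\<bar>"
        unfolding eq by (smt (verit))
      have "\<bar>u ((bx - ax) * s + ax) - u ((by' - ay) * s + ay)\<bar> \<le> M * \<bar>((bx - ax) * s + ax) - ((by' - ay) * s + ay)\<bar>"
        by (rule Mlip[OF inx[OF s] iny[OF s]])
      also have "\<dots> \<le> M * \<bar>x - y\<bar>" using d M0 by (rule mult_left_mono)
      finally show ?thesis by simp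
    qed
    have "norm (integral {0..1} (\<lambda>s. u ((bx - ax) * s + ax) - u ((by' - ay) * s + ay)))
          \<le> integral {0..1} (\<lambda>s::real. M * \<bar>x - y\<bar>)"
      by (rule integral_norm_bound_integral) (use integrable_diff[OF ix iy] pt in auto)
    also have "\<dots> = M * \<bar>x - y\<bar>" by simp
    finally show ?thesis unfolding A B using integral_diff[OF ix iy] by simp
  qed
  have V: "V1 n \<subseteq> {0..1}"
  proof
    fix z assume "z \<in> V1 n"
    then obtain k :: nat where k: "z = real k / 2^n" "k \<le> 2^n" unfolding V1_def by blast
    have "real k \<le> 2^n" using k(2) by (metis of_nat_le_iff of_nat_numeral of_nat_power)
    then show "z \<in> {0..1}" using k(1) by simp
  qed
  show "(\<exists>L. L-lipschitz_on (V1 n) (Avg1 n u)) \<and> lip_semi (V1 n) (Avg1 n u) \<le> lip_semi {0..1} u"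
  proof
    show "\<exists>L. L-lipschitz_on (V1 n) (Avg1 n u)"
      by (rule exI[of _ M], rule lipschitz_onI) (use key V M0 in \<open>auto simp: dist_real_def simp del: atLeastAtMost_iff\<close>)
  next
    have v0: "0 \<in> V1 n" unfolding V1_def by force
    have v1: "1 \<in> V1 n" unfolding V1_def
      by (rule CollectI, rule exI[of _ "2^n"]) simp
    show "lip_semi (V1 n) (Avg1 n u) \<le> lip_semi {0..1} u"
      unfolding lip_semi_def
    proof (rule cSup_least)
      show "{\<bar>Avg1 n u x - Avg1 n u y\<bar> / \<bar>x - y\<bar> |x y. x \<in> V1 n \<and> y \<in> V1 n \<and> x \<noteq> y} \<noteq> {}"
        using v0 v1 by force
    next
      fix q assume "q \<in> {\<bar>Avg1 n u x - Avg1 n u y\<bar> / \<bar>x - y\<bar> |x y. x \<in> V1 n \<and> y \<in> V1 n \<and> x \<noteq> y}"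
      then obtain x y where q: "q = \<bar>Avg1 n u x - Avg1 n u y\<bar> / \<bar>x - y\<bar>" "x \<in> V1 n" "y \<in> V1 n" "x \<noteq> y"
        by blast
      have "\<bar>Avg1 n u x - Avg1 n u y\<bar> \<le> M * \<bar>x - y\<bar>" using key q(2,3) V by blast
      then have "q \<le> M" using q(1,4) by (simp add: pos_divide_le_eq)
      then show "q \<le> Sup {\<bar>u x - u y\<bar> / \<bar>x - y\<bar> |x y. x \<in> {0..1} \<and> y \<in> {0..1} \<and> x \<noteq> y}" unfolding M_def lip_semi_def .
    qed
  qed
qed

end
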